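(* The Sorgenfrey line $\mathbb S$ is strongly discrete homogeneous.
   Context: The Sorgenfrey line is $\mathbb R$ with the topology generated by half-open intervals $[a,b)$. A subset $D$ of $X$ is discrete if each point of $X$ has a neighbourhood containing at most one point of $D$. A Hausdorff space $X$ is strongly discrete homogeneous (sDH) if for any two discrete subsets $A,B$ of $X$ and any bijection $f\colon A\to B$, $f$ extends to a homeomorphism of $X$ onto itself. *)

theory Defs
  imports "HOL-Analysis.Analysis"
begin

definition sorgenfrey_line :: "real topology" where
  "sorgenfrey_line = topology_generated_by {{a..<b} | a b :: real. a < b}"

definition discrete_subset :: "'a topology \<Rightarrow> 'a set \<Rightarrow> bool" where
  "discrete_subset X D \<longleftrightarrow> D \<subseteq> topspace X \<and>
     (\<forall>x\<in>topspace X. \<exists>U. openin X U \<and> x \<in> U \<and>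
        (\<forall>y\<in>U \<inter> D. \<forall>z\<in>U \<inter> D. y = z))"

definition sDH :: "'a topology \<Rightarrow> bool" where
  "sDH X \<longleftrightarrow> Hausdorff_space X \<and>
     (\<forall>A B f. discrete_subset X A \<and> discrete_subset X B \<and> bij_betw f A B \<longrightarrow>
        (\<exists>h. homeomorphic_map X X h \<and> (\<forall>x\<in>A. h x = f x)))"

end

theory Submission
  imports Defs
begin

lemma sorg_topspace[simp]: "topspace sorgenfrey_line = UNIV"
proof -
  have "\<Union>{{a..<b} | a b :: real. a < b} = UNIV"
  proof (intro set_eqI iffI)
    fix x :: real
    show "x \<in> \<Union>{{a..<b} | a b :: real. a < b}"
    proof (rule UnionI[of "{x..<x+1}"])
      show "{x..<x+1} \<in> {{a..<b} | a b :: real. a < b}"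
        by (rule CollectI, intro exI[of _ x] exI[of _ "x+1"]) simp
    qed simp
  qed auto
  then show ?thesis unfolding sorgenfrey_line_def by simp
qed

lemma sorg_open:
  "openin sorgenfrey_line U \<longleftrightarrow> (\<forall>x\<in>U. \<exists>e>0. {x..<x+e} \<subseteq> U)"
proof
  assume "openin sorgenfrey_line U"
  then have "generate_topology_on {{a..<b} | a b :: real. a < b} U"
    unfolding sorgenfrey_line_def by (rule openin_topology_generated_by)
  then show "\<forall>x\<in>U. \<exists>e>0. {x..<x+e} \<subseteq> U"
  proof (induction rule: generate_topology_on.induct)
    case Empty then show ?case by simp
  next
    case (Int a b)
    show ?case
    proof
      fix x assume "x \<in> a \<inter> b"
      then obtain e1 e2 where "e1>0" "{x..<x+e1} \<subseteq> a" "e2>0" "{x..<x+e2} \<subseteq> b"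
        using Int.IH by blast
      moreover have "{x..<x+min e1 e2} \<subseteq> a \<inter> b"
      proof
        fix z assume "z \<in> {x..<x+min e1 e2}"
        then have "z\<in>{x..<x+e1}" "z \<in> {x..<x+e2}" by auto
        then show "z \<in> a\<inter>b" using \<open>{x..<x+e1} \<subseteq> a\<close> \<open>{x..<x+e2} \<subseteq> b\<close> by blast
      qed
      ultimately show "\<exists>e>0. {x..<x+e} \<subseteq> a \<inter> b"
        by (intro exI[of _ "min e1 e2"]) auto
    qed
  next
    case (UN K)
    then show ?case by blast
  next
    case (Basis s)
    then obtain a b where s: "s = {a..<b}" by blast
    show ?case
    proof
      fix x assume "x \<in> s"
      then show "\<exists>e>0. {x..<x+e} \<subseteq> s" using s
        by (intro exI[of _ "b - x"]) auto
    qed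
  qed
next
  assume H: "\<forall>x\<in>U. \<exists>e>0. {x..<x+e} \<subseteq> U"
  then obtain e where e: "\<And>x. x \<in> U \<Longrightarrow> e x > 0 \<and> {x..<x+e x} \<subseteq> U" by metis
  have "U = \<Union>((\<lambda>x. {x..<x+e x}) ` U)"
    using e by fastforce
  moreover have "generate_topology_on {{a..<b} | a b :: real. a < b} (\<Union>((\<lambda>x. {x..<x+e x}) ` U))"
  proof (rule generate_topology_on.UN, clarify, rule generate_topology_on.Basis)
    fix x assume "x \<in> U"
    then show "{x..<x + e x} \<in> {{a..<b} | a b :: real. a < b}"
      using e[of x] by (intro CollectI exI[of _ x] exI[of _ "x + e x"]) simp
  qed
  ultimately show "openin sorgenfrey_line U"
    unfolding sorgenfrey_line_def by (simp add: openin_topology_generated_by_iff)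
qed

lemma sorg_open_interval: "openin sorgenfrey_line {a..<b}"
  unfolding sorg_open by (auto intro!: exI[of _ "b - _"])

lemma sorg_Hausdorff: "Hausdorff_space sorgenfrey_line"
  unfolding Hausdorff_space_def
proof (intro allI impI)
  fix x y :: real
  assume "x \<in> topspace sorgenfrey_line \<and> y \<in> topspace sorgenfrey_line \<and> x \<noteq> y"
  then have "x < y \<or> y < x" by auto
  then show "\<exists>U V. openin sorgenfrey_line U \<and> openin sorgenfrey_line V \<and> x \<in> U \<and> y \<in> V \<and> disjnt U V"
  proof
    assume "x < y"
    then show ?thesis
      by (intro exI[of _ "{x..<y}"] exI[of _ "{y..<y+1}"]) (auto simp: sorg_open_interval disjnt_def)
  next
    assume "y < x"
    then show ?thesis
      by (intro exI[of _ "{x..<x+1}"] exI[of _ "{y..<x}"]) (auto simp: sorg_open_interval disjnt_def)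
  qed
qed


definition part :: "'k set \<Rightarrow> ('k \<Rightarrow> real) \<Rightarrow> ('k \<Rightarrow> real) \<Rightarrow> bool" where
  "part K l r \<longleftrightarrow> (\<forall>k\<in>K. l k < r k) \<and> (\<forall>x. \<exists>!k. k \<in> K \<and> l k \<le> x \<and> x < r k)"

definition pc :: "'k set \<Rightarrow> ('k \<Rightarrow> real) \<Rightarrow> ('k \<Rightarrow> real) \<Rightarrow> real \<Rightarrow> 'k" where
  "pc K l r x = (THE k. k \<in> K \<and> l k \<le> x \<and> x < r k)"

definition glue :: "'k set \<Rightarrow> ('k \<Rightarrow> real) \<Rightarrow> ('k \<Rightarrow> real) \<Rightarrow> ('k \<Rightarrow> real) \<Rightarrow> ('k \<Rightarrow> real) \<Rightarrow> real \<Rightarrow> real" where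
  "glue K l1 r1 l2 r2 x = l2 (pc K l1 r1 x) + (x - l1 (pc K l1 r1 x)) *
      ((r2 (pc K l1 r1 x) - l2 (pc K l1 r1 x)) / (r1 (pc K l1 r1 x) - l1 (pc K l1 r1 x)))"

lemma pc_prop:
  assumes "part K l r"
  shows "pc K l r x \<in> K \<and> l (pc K l r x) \<le> x \<and> x < r (pc K l r x)"
proof -
  have "\<exists>!k. k \<in> K \<and> l k \<le> x \<and> x < r k" using assms unfolding part_def by blast
  then show ?thesis unfolding pc_def by (rule theI')
qed

lemma pc_eq:
  assumes "part K l r" "k \<in> K" "l k \<le> x" "x < r k"
  shows "pc K l r x = k"
proof -
  have "\<exists>!k. k \<in> K \<and> l k \<le> x \<and> x < r k" using assms unfolding part_def by blast
  then show ?thesis unfolding pc_def using assms by (intro the1_equality) auto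
qed

lemma glue_piece:
  assumes p1: "part K l1 r1" and p2: "part K l2 r2" and k: "k \<in> K" "l1 k \<le> x" "x < r1 k"
  shows "glue K l1 r1 l2 r2 x = l2 k + (x - l1 k) * ((r2 k - l2 k) / (r1 k - l1 k))"
    and "l2 k \<le> glue K l1 r1 l2 r2 x" and "glue K l1 r1 l2 r2 x < r2 k"
proof -
  have pk: "pc K l1 r1 x = k" using pc_eq[OF p1 k] .
  show eq: "glue K l1 r1 l2 r2 x = l2 k + (x - l1 k) * ((r2 k - l2 k) / (r1 k - l1 k))"
    unfolding glue_def pk ..
  have lt1: "l1 k < r1 k" and lt2: "l2 k < r2 k" using p1 p2 k unfolding part_def by auto
  have "0 \<le> (x - l1 k) * ((r2 k - l2 k) / (r1 k - l1 k))"
    using lt1 lt2 k by simp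
  then show "l2 k \<le> glue K l1 r1 l2 r2 x" unfolding eq by simp
  have "(x - l1 k) * ((r2 k - l2 k) / (r1 k - l1 k)) < (r1 k - l1 k) * ((r2 k - l2 k) / (r1 k - l1 k))"
    using lt1 lt2 k by (intro mult_strict_right_mono) auto
  also have "\<dots> = r2 k - l2 k" using lt1 by simp
  finally show "glue K l1 r1 l2 r2 x < r2 k" unfolding eq by simp
qed

lemma glue_inv:
  assumes p1: "part K l1 r1" and p2: "part K l2 r2"
  shows "glue K l2 r2 l1 r1 (glue K l1 r1 l2 r2 x) = x"
proof -
  define k where "k = pc K l1 r1 x"
  have k: "k \<in> K" "l1 k \<le> x" "x < r1 k" using pc_prop[OF p1, of x] k_def by auto
  have lt1: "l1 k < r1 k" and lt2: "l2 k < r2 k" using p1 p2 k unfolding part_def by auto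
  note g = glue_piece[OF p1 p2 k]
  have "glue K l2 r2 l1 r1 (glue K l1 r1 l2 r2 x) =
      l1 k + (glue K l1 r1 l2 r2 x - l2 k) * ((r1 k - l1 k) / (r2 k - l2 k))"
    by (rule glue_piece(1)[OF p2 p1 k(1) g(2,3)])
  also have "\<dots> = x"
  proof -
    have "((r2 k - l2 k) / (r1 k - l1 k)) * ((r1 k - l1 k) / (r2 k - l2 k)) = 1"
      using lt1 lt2 by simp
    then show ?thesis unfolding g(1)
      by (metis (no_types, lifting) add.commute diff_add_cancel add_diff_cancel_right' mult.assoc mult.right_neutral)
  qed
  finally show ?thesis .
qed

lemma glue_open:
  assumes p1: "part K l1 r1" and p2: "part K l2 r2" and U: "openin sorgenfrey_line U"
  shows "openin sorgenfrey_line (glue K l1 r1 l2 r2 ` U)"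
  unfolding sorg_open
proof
  fix y assume "y \<in> glue K l1 r1 l2 r2 ` U"
  then obtain x where x: "x \<in> U" "y = glue K l1 r1 l2 r2 x" by blast
  obtain e where e: "e > 0" "{x..<x+e} \<subseteq> U" using U x unfolding sorg_open by blast
  define k where "k = pc K l1 r1 x"
  have k: "k \<in> K" "l1 k \<le> x" "x < r1 k" using pc_prop[OF p1, of x] k_def by auto
  have lt1: "l1 k < r1 k" and lt2: "l2 k < r2 k" using p1 p2 k unfolding part_def by auto
  define lam where "lam = (r2 k - l2 k) / (r1 k - l1 k)"
  have lam: "lam > 0" unfolding lam_def using lt1 lt2 by simp
  define d where "d = min e (r1 k - x)"
  have d: "d > 0" unfolding d_def using e k by simp
  have gx: "glue K l1 r1 l2 r2 x = l2 k + (x - l1 k) * lam"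
    unfolding lam_def by (rule glue_piece(1)[OF p1 p2 k])
  show "\<exists>e>0. {y..<y + e} \<subseteq> glue K l1 r1 l2 r2 ` U"
  proof (intro exI conjI)
    show "lam * d > 0" using lam d by simp
    show "{y..<y + lam * d} \<subseteq> glue K l1 r1 l2 r2 ` U"
    proof
      fix z assume z: "z \<in> {y..<y + lam * d}"
      define w where "w = x + (z - y) / lam"
      have "0 \<le> (z - y) / lam" using z lam by simp
      moreover have "(z - y) / lam < d" using z lam by (simp add: divide_less_eq mult.commute)
      ultimately have w: "x \<le> w" "w < x + d" unfolding w_def by auto
      then have "w \<in> U" using e d_def by auto
      have wk: "l1 k \<le> w" "w < r1 k" using w k d_def by auto
      have "glue K l1 r1 l2 r2 w = l2 k + (w - l1 k) * lam"
        unfolding lam_def by (rule glue_piece(1)[OF p1 p2 k(1) wk])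
      also have "\<dots> = z" unfolding w_def using lam x(2) gx by (simp add: field_simps)
      finally show "z \<in> glue K l1 r1 l2 r2 ` U" using \<open>w \<in> U\<close> by (metis image_eqI)
    qed
  qed
qed

lemma glue_homeo:
  assumes p1: "part K l1 r1" and p2: "part K l2 r2"
  shows "homeomorphic_map sorgenfrey_line sorgenfrey_line (glue K l1 r1 l2 r2)"
    and "\<And>k. k \<in> K \<Longrightarrow> glue K l1 r1 l2 r2 (l1 k) = l2 k"
proof -
  let ?f = "glue K l1 r1 l2 r2" and ?g = "glue K l2 r2 l1 r1"
  have fg: "\<And>x. ?g (?f x) = x" by (rule glue_inv[OF p1 p2])
  have gf: "\<And>x. ?f (?g x) = x" by (rule glue_inv[OF p2 p1])
  have cf: "continuous_map sorgenfrey_line sorgenfrey_line ?f"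
    unfolding continuous_map
  proof (intro conjI allI impI)
    fix U assume "openin sorgenfrey_line U"
    moreover have "{x \<in> topspace sorgenfrey_line. ?f x \<in> U} = ?g ` U"
      using fg gf by (auto intro: image_eqI[where x="?f _"])
    ultimately show "openin sorgenfrey_line {x \<in> topspace sorgenfrey_line. ?f x \<in> U}"
      using glue_open[OF p2 p1] by simp
  qed simp
  have cg: "continuous_map sorgenfrey_line sorgenfrey_line ?g"
    unfolding continuous_map
  proof (intro conjI allI impI)
    fix U assume "openin sorgenfrey_line U"
    moreover have "{x \<in> topspace sorgenfrey_line. ?g x \<in> U} = ?f ` U"
      using fg gf by (auto intro: image_eqI[where x="?g _"])
    ultimately show "openin sorgenfrey_line {x \<in> topspace sorgenfrey_line. ?g x \<in> U}"
      using glue_open[OF p1 p2] by simp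
  qed simp
  have "homeomorphic_maps sorgenfrey_line sorgenfrey_line ?f ?g"
    unfolding homeomorphic_maps_def using cf cg fg gf by blast
  then show "homeomorphic_map sorgenfrey_line sorgenfrey_line ?f"
    unfolding homeomorphic_map_maps by blast
  fix k assume k: "k \<in> K"
  then have "l1 k < r1 k" using p1 unfolding part_def by auto
  then show "?f (l1 k) = l2 k" using glue_piece(1)[OF p1 p2 k, of "l1 k"] by simp
qed


definition nxt :: "real set \<Rightarrow> real \<Rightarrow> real" where
  "nxt C c = Inf (C \<inter> {c<..})"

definition goodC :: "real set \<Rightarrow> bool" where
  "goodC C \<longleftrightarrow> closed C \<and> (\<forall>n::int. real_of_int n \<in> C) \<and> (\<forall>x. \<exists>e>0. \<forall>y\<in>C. \<not>(x<y \<and> y<x+e))"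

lemma nxt_props:
  assumes "goodC C"
  shows "nxt C c \<in> C" "c < nxt C c" "\<And>y. y \<in> C \<Longrightarrow> c < y \<Longrightarrow> nxt C c \<le> y"
proof -
  obtain e where e: "e > 0" "\<forall>y\<in>C. \<not>(c<y \<and> y<c+e)" using assms unfolding goodC_def by blast
  define S where "S = C \<inter> {c+e..}"
  have eq: "C \<inter> {c<..} = S" unfolding S_def using e by force
  have "real_of_int (\<lfloor>c+e\<rfloor>+1) \<in> C" using assms unfolding goodC_def by blast
  moreover have "real_of_int (\<lfloor>c+e\<rfloor>+1) \<ge> c + e" by linarith
  ultimately have ne: "S \<noteq> {}" unfolding S_def by blast
  have bdd: "bdd_below S" unfolding S_def by (rule bdd_belowI[of _ "c+e"]) auto
  have cl: "closed S" unfolding S_def using assms unfolding goodC_def by (simp add: closed_Int)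
  have "Inf S \<in> S" by (rule closed_contains_Inf[OF ne bdd cl])
  then show "nxt C c \<in> C" "c < nxt C c" unfolding nxt_def eq S_def using e by auto
  fix y assume "y \<in> C" "c < y"
  then have "y \<in> S" using eq by blast
  then show "nxt C c \<le> y" unfolding nxt_def eq by (rule cInf_lower[OF _ bdd])
qed

lemma nxt_cover:
  assumes "goodC C"
  shows "\<exists>!c. c \<in> C \<and> c \<le> x \<and> x < nxt C c"
proof -
  define T where "T = C \<inter> {..x}"
  have "real_of_int \<lfloor>x\<rfloor> \<in> C" using assms unfolding goodC_def by blast
  then have ne: "T \<noteq> {}" unfolding T_def by (auto intro!: exI[of _ "real_of_int \<lfloor>x\<rfloor>"])
  have bdd: "bdd_above T" unfolding T_def by (rule bdd_aboveI[of _ x]) auto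
  have cl: "closed T" unfolding T_def using assms unfolding goodC_def by (simp add: closed_Int)
  define s where "s = Sup T"
  have sT: "s \<in> T" unfolding s_def by (rule closed_contains_Sup[OF ne bdd cl])
  have "x < nxt C s"
  proof (rule ccontr)
    assume "\<not> x < nxt C s"
    then have "nxt C s \<in> T" unfolding T_def using nxt_props(1)[OF assms] by auto
    then have "nxt C s \<le> s" unfolding s_def by (rule cSup_upper[OF _ bdd])
    then show False using nxt_props(2)[OF assms, of s] by simp
  qed
  then have ex: "s \<in> C \<and> s \<le> x \<and> x < nxt C s" using sT unfolding T_def by auto
  show ?thesis
  proof (rule ex1I[of _ s])
    show "s \<in> C \<and> s \<le> x \<and> x < nxt C s" by (rule ex)
    fix c assume c: "c \<in> C \<and> c \<le> x \<and> x < nxt C c"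
    show "c = s"
    proof (rule ccontr)
      assume "c \<noteq> s"
      then have "c < s \<or> s < c" by auto
      then show False
      proof
        assume "c < s"
        then have "nxt C c \<le> s" using nxt_props(3)[OF assms, of s c] ex by auto
        then show False using c ex by auto
      next
        assume "s < c"
        then have "nxt C s \<le> c" using nxt_props(3)[OF assms, of c s] c by auto
        then show False using c ex by auto
      qed
    qed
  qed
qed

definition lft :: "real set \<Rightarrow> real \<times> bool \<Rightarrow> real" where
  "lft C k = (if snd k then fst k else (fst k + nxt C (fst k)) / 2)"
definition rgt :: "real set \<Rightarrow> real \<times> bool \<Rightarrow> real" where
  "rgt C k = (if snd k then (fst k + nxt C (fst k)) / 2 else nxt C (fst k))"

lemma goodC_part:
  assumes "goodC C"
  shows "part (C \<times> UNIV) (lft C) (rgt C)"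
  unfolding part_def
proof (intro conjI ballI allI)
  fix k assume "k \<in> C \<times> (UNIV :: bool set)"
  then show "lft C k < rgt C k" using nxt_props(2)[OF assms, of "fst k"]
    unfolding lft_def rgt_def by auto
next
  fix x
  obtain c where c: "c \<in> C" "c \<le> x" "x < nxt C c" using nxt_cover[OF assms, of x] by blast
  have lt: "c < nxt C c" by (rule nxt_props(2)[OF assms])
  let ?k = "(c, x < (c + nxt C c)/2)"
  show "\<exists>!k. k \<in> C \<times> UNIV \<and> lft C k \<le> x \<and> x < rgt C k"
  proof (rule ex1I[of _ ?k])
    show "?k \<in> C \<times> UNIV \<and> lft C ?k \<le> x \<and> x < rgt C ?k"
      using c unfolding lft_def rgt_def by auto
    fix k assume k: "k \<in> C \<times> UNIV \<and> lft C k \<le> x \<and> x < rgt C k"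
    have lt2: "fst k < nxt C (fst k)" by (rule nxt_props(2)[OF assms])
    have "fst k \<in> C \<and> fst k \<le> x \<and> x < nxt C (fst k)"
      using k lt2 unfolding lft_def rgt_def by (auto split: if_splits)
    then have "fst k = c" using nxt_cover[OF assms, of x] c by blast
    then show "k = ?k" using k unfolding lft_def rgt_def by (cases k) (auto split: if_splits)
  qed
qed

lemma goodC_countable:
  assumes "goodC C"
  shows "countable C"
proof -
  have "\<forall>c\<in>C. \<exists>q\<in>\<rat>. c < q \<and> q < nxt C c"
    using nxt_props(2)[OF assms] Rats_dense_in_real by blast
  then obtain q where q: "\<And>c. c \<in> C \<Longrightarrow> q c \<in> \<rat> \<and> c < q c \<and> q c < nxt C c" by metis
  have inj: "inj_on q C"
  proof (rule inj_onI, rule ccontr)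
    fix a b assume ab: "a \<in> C" "b \<in> C" "q a = q b" "a \<noteq> b"
    have "False" if "a \<in> C" "b \<in> C" "q a = q b" "a < b" for a b
    proof -
      have "nxt C a \<le> b" using nxt_props(3)[OF assms that(2) that(4)] .
      then show False using q[OF that(1)] q[OF that(2)] that(3) by auto
    qed
    then show False using ab by (metis linorder_neqE_linordered_idom)
  qed
  have "countable (q ` C)" by (rule countable_subset[OF _ countable_rat]) (use q in auto)
  then show ?thesis using inj by (rule countable_image_inj_on)
qed

lemma disc_pt:
  assumes "discrete_subset sorgenfrey_line A"
  shows "\<exists>e>0. \<forall>y\<in>A. \<not>(x<y \<and> y<x+e)"
proof -
  have "\<exists>U. openin sorgenfrey_line U \<and> x \<in> U \<and> (\<forall>y\<in>U \<inter> A. \<forall>z\<in>U \<inter> A. y = z)"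
    using assms unfolding discrete_subset_def by simp
  then obtain U where U: "openin sorgenfrey_line U" "x \<in> U" "\<forall>y\<in>U \<inter> A. \<forall>z\<in>U \<inter> A. y = z"
    by blast
  obtain e0 where e0: "e0 > 0" "{x..<x+e0} \<subseteq> U" using U sorg_open by blast
  show ?thesis
  proof (cases "\<exists>z\<in>A. x<z \<and> z<x+e0")
    case True
    then obtain z where z: "z \<in> A" "x<z" "z<x+e0" by blast
    show ?thesis
    proof (intro exI[of _ "z - x"] conjI ballI notI)
      show "z - x > 0" using z by simp
      fix y assume "y \<in> A" "x < y \<and> y < x + (z - x)"
      then have "y \<in> U \<inter> A" "z \<in> U \<inter> A" using z e0 by auto
      then have "y = z" using U(3) by blast
      then show False using \<open>x < y \<and> y < x + (z - x)\<close> by simp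
    qed
  next
    case False
    then show ?thesis using e0 by blast
  qed
qed

lemma disc_goodC:
  assumes "discrete_subset sorgenfrey_line A"
  shows "goodC (closure (A \<union> \<int>))" "A \<subseteq> closure (A \<union> \<int>)"
proof -
  show "A \<subseteq> closure (A \<union> \<int>)" using closure_subset by blast
  have "\<forall>x. \<exists>e>0. \<forall>y\<in>closure (A \<union> \<int>). \<not>(x<y \<and> y<x+e)"
  proof
    fix x :: real
    obtain e1 where e1: "e1>0" "\<forall>y\<in>A. \<not>(x<y \<and> y<x+e1)" using disc_pt[OF assms] by blast
    define e where "e = min e1 (real_of_int (\<lfloor>x\<rfloor>+1) - x)"
    have e: "e > 0" unfolding e_def using e1 by linarith
    have "{x<..<x+e} \<inter> (A \<union> \<int>) = {}"
    proof (rule ccontr)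
      assume "{x<..<x+e} \<inter> (A \<union> \<int>) \<noteq> {}"
      then obtain y where y: "x < y" "y < x + e" "y \<in> A \<union> \<int>" by fastforce
      show False
      proof (cases "y \<in> A")
        case True then show ?thesis using e1 y unfolding e_def by auto
      next
        case False
        then obtain n where n: "y = real_of_int n" using y(3) Ints_cases by blast
        then have "n > \<lfloor>x\<rfloor>" using y(1) by (metis floor_less_iff)
        then have "real_of_int n \<ge> real_of_int (\<lfloor>x\<rfloor>+1)" by linarith
        then show False using y n unfolding e_def by linarith
      qed
    qed
    then have "{x<..<x+e} \<inter> closure (A \<union> \<int>) = {}"
      using open_Int_closure_eq_empty[of "{x<..<x+e}" "A \<union> \<int>"] by (simp only: open_greaterThanLessThan simp_thms)
    then have "\<forall>y\<in>closure (A \<union> \<int>). \<not>(x<y \<and> y<x+e)"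
      by (metis IntI empty_iff greaterThanLessThan_iff)
    then show "\<exists>e>0. \<forall>y\<in>closure (A \<union> \<int>). \<not>(x<y \<and> y<x+e)" using e by blast
  qed
  moreover have "\<forall>n::int. real_of_int n \<in> closure (A \<union> \<int>)" using closure_subset by auto
  ultimately show "goodC (closure (A \<union> \<int>))" unfolding goodC_def by auto
qed


lemma part_reindex:
  assumes p: "part K2 l r" and s: "bij_betw \<sigma> K1 K2"
  shows "part K1 (l \<circ> \<sigma>) (r \<circ> \<sigma>)"
  unfolding part_def
proof (intro conjI ballI allI)
  fix k assume "k \<in> K1"
  then show "(l \<circ> \<sigma>) k < (r \<circ> \<sigma>) k" using p s unfolding part_def bij_betw_def by auto
next
  fix x
  obtain k2 where k2: "k2 \<in> K2" "l k2 \<le> x" "x < r k2" using p unfolding part_def by blast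
  obtain k1 where k1: "k1 \<in> K1" "\<sigma> k1 = k2" using s k2(1) unfolding bij_betw_def by blast
  show "\<exists>!k. k \<in> K1 \<and> (l \<circ> \<sigma>) k \<le> x \<and> x < (r \<circ> \<sigma>) k"
  proof (rule ex1I[of _ k1])
    show "k1 \<in> K1 \<and> (l \<circ> \<sigma>) k1 \<le> x \<and> x < (r \<circ> \<sigma>) k1" using k1 k2 by auto
    fix k assume k: "k \<in> K1 \<and> (l \<circ> \<sigma>) k \<le> x \<and> x < (r \<circ> \<sigma>) k"
    then have "\<sigma> k \<in> K2" using s unfolding bij_betw_def by auto
    then have "\<sigma> k = k2" using p k k2 unfolding part_def by auto
    then show "k = k1" using k k1 s unfolding bij_betw_def inj_on_def by auto
  qed
qed

lemma goodC_infinite: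
  assumes "goodC C"
  shows "infinite C"
proof
  assume "finite C"
  moreover have "range real_of_int \<subseteq> C" using assms unfolding goodC_def by auto
  ultimately have "finite (range (real_of_int :: int \<Rightarrow> real))" by (rule finite_subset[rotated])
  moreover have "inj (real_of_int :: int \<Rightarrow> real)" by (simp add: inj_on_def)
  ultimately have "finite (UNIV :: int set)" using finite_imageD by blast
  then show False by simp
qed

theorem mainTheorem7:
  shows "sDH sorgenfrey_line"
  unfolding sDH_def
proof (intro conjI allI impI sorg_Hausdorff)
  fix A B :: "real set" and f
  assume H: "discrete_subset sorgenfrey_line A \<and> discrete_subset sorgenfrey_line B \<and> bij_betw f A B"
  define CA where "CA = closure (A \<union> \<int>)"
  define CB where "CB = closure (B \<union> \<int>)"
  have gA: "goodC CA" "A \<subseteq> CA" using disc_goodC H unfolding CA_def by auto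
  have gB: "goodC CB" "B \<subseteq> CB" using disc_goodC H unfolding CB_def by auto
  define KA where "KA = CA \<times> (UNIV :: bool set)"
  define KB where "KB = CB \<times> (UNIV :: bool set)"
  define PA where "PA = (\<lambda>a. (a, True)) ` A"
  define PB where "PB = (\<lambda>a. (a, True)) ` B"
  define FA where "FA = KA - PA"
  define FB where "FB = KB - PB"
  have cFA: "countable FA" unfolding FA_def KA_def using goodC_countable[OF gA(1)] by auto
  have cFB: "countable FB" unfolding FB_def KB_def using goodC_countable[OF gB(1)] by auto
  have "CA \<times> {False} \<subseteq> FA" unfolding FA_def KA_def PA_def by auto
  moreover have "infinite (CA \<times> {False})" using goodC_infinite[OF gA(1)] by (auto simp: finite_cartesian_product_iff)
  ultimately have iFA: "infinite FA" using finite_subset by blast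
  have "CB \<times> {False} \<subseteq> FB" unfolding FB_def KB_def PB_def by auto
  moreover have "infinite (CB \<times> {False})" using goodC_infinite[OF gB(1)] by (auto simp: finite_cartesian_product_iff)
  ultimately have iFB: "infinite FB" using finite_subset by blast
  have bA: "bij_betw (from_nat_into FA) UNIV FA" by (rule bij_betw_from_nat_into[OF cFA iFA])
  have bB: "bij_betw (from_nat_into FB) UNIV FB" by (rule bij_betw_from_nat_into[OF cFB iFB])
  define \<tau> where "\<tau> = from_nat_into FB \<circ> inv_into UNIV (from_nat_into FA)"
  have t: "bij_betw \<tau> FA FB" unfolding \<tau>_def by (rule bij_betw_trans[OF bij_betw_inv_into[OF bA] bB])
  define \<phi> where "\<phi> = (\<lambda>k::real\<times>bool. (f (fst k), True))"
  have ph: "bij_betw \<phi> PA PB"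
    using H unfolding bij_betw_def inj_on_def PA_def PB_def \<phi>_def by (auto simp: image_iff)
  define \<sigma> where "\<sigma> = (\<lambda>k. if k \<in> PA then \<phi> k else \<tau> k)"
  have "bij_betw \<sigma> (PA \<union> FA) (PB \<union> FB)"
    unfolding \<sigma>_def by (rule bij_betw_disjoint_Un[OF ph t]) (auto simp: FA_def FB_def)
  moreover have "PA \<union> FA = KA" "PB \<union> FB = KB"
    using gA gB unfolding FA_def FB_def PA_def PB_def KA_def KB_def by auto
  ultimately have s: "bij_betw \<sigma> KA KB" by simp
  have p1: "part KA (lft CA) (rgt CA)" unfolding KA_def by (rule goodC_part[OF gA(1)])
  have p2: "part KA (lft CB \<circ> \<sigma>) (rgt CB \<circ> \<sigma>)"
    by (rule part_reindex[OF _ s]) (unfold KB_def, rule goodC_part[OF gB(1)])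
  show "\<exists>h. homeomorphic_map sorgenfrey_line sorgenfrey_line h \<and> (\<forall>x\<in>A. h x = f x)"
  proof (intro exI conjI ballI)
    show "homeomorphic_map sorgenfrey_line sorgenfrey_line (glue KA (lft CA) (rgt CA) (lft CB \<circ> \<sigma>) (rgt CB \<circ> \<sigma>))"
      by (rule glue_homeo(1)[OF p1 p2])
    fix a assume a: "a \<in> A"
    have k: "(a, True) \<in> KA" "(a, True) \<in> PA" using a gA unfolding KA_def PA_def by auto
    have "glue KA (lft CA) (rgt CA) (lft CB \<circ> \<sigma>) (rgt CB \<circ> \<sigma>) (lft CA (a, True)) = (lft CB \<circ> \<sigma>) (a, True)"
      by (rule glue_homeo(2)[OF p1 p2 k(1)])
    then show "glue KA (lft CA) (rgt CA) (lft CB \<circ> \<sigma>) (rgt CB \<circ> \<sigma>) a = f a"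
      using k(2) unfolding \<sigma>_def \<phi>_def lft_def by simp
  qed
qed

end
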